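(* Suppose the matrix $P$ satisfies simultaneously: (i) for all $n\in\mathbb N$ and all $c\in\{1,2,\dots,m_n\}$, $p_{c,n}\cdot p_{c-1,n}<0$; and (ii) the limits $\lim_{n\to\infty}\prod_{k=1}^{n}\frac{p_{0,k}}{q_{0,k}}$ and $\lim_{n\to\infty}\prod_{k=1}^{n}\frac{p_{m_k,k}}{q_{m_k,k}}$ are both different from $0$. Then $F$ has neither a finite nor an infinite derivative at any nega-$\tilde Q$-rational point of $[0,1]$.
   Context: Let $(m_n)_{n\ge1}$ be finite nonnegative integers and $\tilde Q=\|q_{i,n}\|$ ($i\in\{0,\dots,m_n\}$) with $q_{i,n}>0$, $\sum_{i}q_{i,n}=1$ for all $n$, and $\prod_n q_{i_n,n}=0$ for every digit sequence $(i_n)$. Put $a_{0,n}=0$, $a_{i,n}=\sum_{l<i}q_{l,n}$; $\Delta^{\tilde Q}_{j_1j_2\dots}=a_{j_1,1}+\sum_{n\ge2}a_{j_n,n}\prod_{l<n}q_{j_l,l}$. The nega-$\tilde Q$-representation $x=\Delta^{-\tilde Q}_{i_1i_2\dots}$ means $x=\Delta^{\tilde Q}_{i_1[m_2-i_2]i_3[m_4-i_4]\dots}$; every $x\in[0,1]$ has one. The nega-$\tilde Q$-rational points are the numbers $\Delta^{-\tilde Q}_{i_1\dots i_{n-1}i_nm_{n+1}0m_{n+3}0m_{n+5}\dots}=\Delta^{-\tilde Q}_{i_1\dots i_{n-1}[i_n-1]0m_{n+2}0m_{n+4}\dots}$ with $i_n\ne0$ (they have two representations). Let $P=\|p_{i,n}\|$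 have the same shape with $p_{i,n}\in(-1,1)$, $\sum_ip_{i,n}=1$, $\prod_n|p_{i_n,n}|=0$ for every digit sequence, $0<\sum_{i<c}p_{i,n}<1$ for $c\in\{1,\dots,m_n\}$. Put $\beta_{0,n}=0$, $\beta_{c,n}=\sum_{i<c}p_{i,n}$; for odd $n$: $\tilde p_{i,n}=p_{i,n}$, $\tilde\beta_{i,n}=\beta_{i,n}$; for even $n$: $\tilde p_{i,n}=p_{m_n-i,n}$, $\tilde\beta_{i,n}=\beta_{m_n-i,n}$. $F(x)=\beta_{i_1,1}+\sum_{k\ge2}\tilde\beta_{i_k,k}\prod_{j<k}\tilde p_{i_j,j}$ for $x=\Delta^{-\tilde Q}_{i_1i_2\dots}$ (independent of the representation); $F$ is the unique bounded solution on $[0,1]$ of the system $f(\hat\varphi^k(x))=\tilde\beta_{i_{k+1}(x),k+1}+\tilde p_{i_{k+1}(x),k+1}f(\hat\varphi^{k+1}(x))$, $k\ge0$, where $\hat\varphi$ is the shift of $\tilde Q$-digits. *)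

theory Defs
  imports "HOL-Analysis.Analysis"
begin

text \<open>Conventions: columns are indexed by n \<ge> 1 (values at n = 0 are ignored);
  the matrix entry q_{i,n} is written q i n; digits of column n lie in {0..m n}.\<close>

definition digit_seq :: "(nat \<Rightarrow> nat) \<Rightarrow> (nat \<Rightarrow> nat) \<Rightarrow> bool" where
  "digit_seq m d \<longleftrightarrow> (\<forall>n\<ge>1. d n \<le> m n)"

definition aQ :: "(nat \<Rightarrow> nat \<Rightarrow> real) \<Rightarrow> nat \<Rightarrow> nat \<Rightarrow> real" where
  "aQ q i n = (\<Sum>l<i. q l n)"

definition DeltaQ :: "(nat \<Rightarrow> nat \<Rightarrow> real) \<Rightarrow> (nat \<Rightarrow> nat) \<Rightarrow> real" where
  "DeltaQ q d = (\<Sum>k. aQ q (d (Suc k)) (Suc k) * (\<Prod>l=1..k. q (d l) l))"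

definition nega_digits :: "(nat \<Rightarrow> nat) \<Rightarrow> (nat \<Rightarrow> nat) \<Rightarrow> nat \<Rightarrow> nat" where
  "nega_digits m d n = (if even n then m n - d n else d n)"

definition nega_DeltaQ :: "(nat \<Rightarrow> nat) \<Rightarrow> (nat \<Rightarrow> nat \<Rightarrow> real) \<Rightarrow> (nat \<Rightarrow> nat) \<Rightarrow> real" where
  "nega_DeltaQ m q d = DeltaQ q (nega_digits m d)"

text \<open>Nega-Q-tilde-rational points: \<Delta>^{-Q}_{i_1...i_n m_{n+1} 0 m_{n+3} 0 ...}, i_n \<noteq> 0.\<close>
definition nega_rational_points :: "(nat \<Rightarrow> nat) \<Rightarrow> (nat \<Rightarrow> nat \<Rightarrow> real) \<Rightarrow> real set" where
  "nega_rational_points m q = {x. \<exists>d n. n \<ge> 1 \<and> digit_seq m d \<and> d n \<noteq> 0 \<and>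
      (\<forall>k>n. d k = (if odd (k - n) then m k else 0)) \<and> x = nega_DeltaQ m q d}"

definition betaP :: "(nat \<Rightarrow> nat \<Rightarrow> real) \<Rightarrow> nat \<Rightarrow> nat \<Rightarrow> real" where
  "betaP p c n = (\<Sum>i<c. p i n)"

definition tilde_p :: "(nat \<Rightarrow> nat) \<Rightarrow> (nat \<Rightarrow> nat \<Rightarrow> real) \<Rightarrow> nat \<Rightarrow> nat \<Rightarrow> real" where
  "tilde_p m p i n = (if odd n then p i n else p (m n - i) n)"

definition tilde_beta :: "(nat \<Rightarrow> nat) \<Rightarrow> (nat \<Rightarrow> nat \<Rightarrow> real) \<Rightarrow> nat \<Rightarrow> nat \<Rightarrow> real" where
  "tilde_beta m p i n = (if odd n then betaP p i n else betaP p (m n - i) n)"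

text \<open>The function F, evaluated through a (chosen) nega-Q-tilde representation of x;
  by the context it does not depend on the choice of representation.\<close>
definition F_series :: "(nat \<Rightarrow> nat) \<Rightarrow> (nat \<Rightarrow> nat \<Rightarrow> real) \<Rightarrow> (nat \<Rightarrow> nat) \<Rightarrow> real" where
  "F_series m p d = (\<Sum>k. tilde_beta m p (d (Suc k)) (Suc k) * (\<Prod>j=1..k. tilde_p m p (d j) j))"

definition FF :: "(nat \<Rightarrow> nat) \<Rightarrow> (nat \<Rightarrow> nat \<Rightarrow> real) \<Rightarrow> (nat \<Rightarrow> nat \<Rightarrow> real) \<Rightarrow> real \<Rightarrow> real" where
  "FF m q p x = F_series m p (SOME d. digit_seq m d \<and> nega_DeltaQ m q d = x)"

definition has_infinite_derivative :: "(real \<Rightarrow> real) \<Rightarrow> real \<Rightarrow> real set \<Rightarrow> bool" where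
  "has_infinite_derivative f x S \<longleftrightarrow>
     filterlim (\<lambda>y. (f y - f x) / (y - x)) at_top (at x within S) \<or>
     filterlim (\<lambda>y. (f y - f x) / (y - x)) at_bot (at x within S)"

end

theory Submission imports Defs begin

definition pr :: "(nat\<Rightarrow>nat\<Rightarrow>real) \<Rightarrow> (nat\<Rightarrow>nat) \<Rightarrow> nat \<Rightarrow> nat \<Rightarrow> real" where
  "pr f c i j = (\<Prod>l\<in>{i<..j}. f (c l) l)"

definition tg :: "(nat\<Rightarrow>nat\<Rightarrow>real) \<Rightarrow> (nat\<Rightarrow>nat) \<Rightarrow> nat \<Rightarrow> nat \<Rightarrow> real" where
  "tg f c J k = aQ f (c (J+k+1)) (J+k+1) * pr f c J (J+k)"

definition TT :: "(nat\<Rightarrow>nat\<Rightarrow>real) \<Rightarrow> (nat\<Rightarrow>nat) \<Rightarrow> nat \<Rightarrow> real" where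
  "TT f c J = suminf (tg f c J)"

definition RR :: "(nat\<Rightarrow>nat\<Rightarrow>real) \<Rightarrow> (nat\<Rightarrow>nat) \<Rightarrow> nat \<Rightarrow> nat \<Rightarrow> real" where
  "RR f c J M = (\<Sum>k<M. tg f c J k)"

definition good :: "(nat\<Rightarrow>nat) \<Rightarrow> (nat\<Rightarrow>nat\<Rightarrow>real) \<Rightarrow> bool" where
  "good m f \<longleftrightarrow> (\<forall>n\<ge>1. \<forall>c\<le>m n + 1. 0 \<le> aQ f c n \<and> aQ f c n \<le> 1)
     \<and> (\<forall>n\<ge>1. aQ f (Suc (m n)) n = 1) \<and> (\<forall>n\<ge>1. \<forall>i\<le>m n. f i n \<noteq> 0)
     \<and> (\<forall>d. digit_seq m d \<longrightarrow> (\<lambda>N. pr f d 0 N) \<longlonglongrightarrow> 0)"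

lemma aQ_Suc: "aQ f (Suc c) n = aQ f c n + f c n"
  by (simp add: aQ_def)

lemma aQ_0[simp]: "aQ f 0 n = 0"
  by (simp add: aQ_def)

lemma pr_same[simp]: "pr f c i i = 1"
  by (simp add: pr_def)

lemma pr_Suc: "i \<le> j \<Longrightarrow> pr f c i (Suc j) = pr f c i j * f (c (Suc j)) (Suc j)"
proof -
  assume "i \<le> j"
  then have "{i<..Suc j} = insert (Suc j) {i<..j}" by auto
  then show ?thesis by (simp add: pr_def mult.commute)
qed

lemma pr_split: "i \<le> j \<Longrightarrow> j \<le> k \<Longrightarrow> pr f c i k = pr f c i j * pr f c j k"
proof -
  assume a: "i \<le> j" "j \<le> k"
  then have "{i<..k} = {i<..j} \<union> {j<..k}" by auto
  then show ?thesis unfolding pr_def by (simp add: prod.union_disjoint ivl_disj_int)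
qed

lemma pr_head: "pr f c J (J + Suc k) = f (c (J+1)) (J+1) * pr f c (J+1) (J+1+k)"
proof -
  have "pr f c J (J + Suc k) = pr f c J (J+1) * pr f c (J+1) (J+1+k)"
    using pr_split[of J "J+1" "J+1+k" f c] by simp
  moreover have "pr f c J (J+1) = f (c (J+1)) (J+1)"
    using pr_Suc[of J J f c] by simp
  ultimately show ?thesis by simp
qed

lemma pr_cong: "(\<And>l. i < l \<Longrightarrow> l \<le> j \<Longrightarrow> c l = c' l) \<Longrightarrow> pr f c i j = pr f c' i j"
  unfolding pr_def by (rule prod.cong) auto

lemma pr_0: "pr f c 0 N = (\<Prod>k=1..N. f (c k) k)"
proof -
  have "{0<..N} = {1..N}" by auto
  then show ?thesis by (simp add: pr_def)
qed

lemma tg_Suc: "tg f c J (Suc i) = f (c (J+1)) (J+1) * tg f c (J+1) i"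
  unfolding tg_def using pr_head[of f c J i] by (simp add: algebra_simps)

lemma tg_0: "tg f c J 0 = aQ f (c (J+1)) (J+1)"
  by (simp add: tg_def)

lemma RR_Suc: "RR f c J (Suc M) = aQ f (c (J+1)) (J+1) + f (c (J+1)) (J+1) * RR f c (J+1) M"
  unfolding RR_def by (simp only: sum.lessThan_Suc_shift tg_Suc tg_0 sum_distrib_left)

lemma goodD:
  assumes "good m f"
  shows "\<And>n c. n \<ge> 1 \<Longrightarrow> c \<le> m n + 1 \<Longrightarrow> 0 \<le> aQ f c n"
    "\<And>n c. n \<ge> 1 \<Longrightarrow> c \<le> m n + 1 \<Longrightarrow> aQ f c n \<le> 1"
    "\<And>n. n \<ge> 1 \<Longrightarrow> aQ f (Suc (m n)) n = 1"
    "\<And>n i. n \<ge> 1 \<Longrightarrow> i \<le> m n \<Longrightarrow> f i n \<noteq> 0"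
    "\<And>d. digit_seq m d \<Longrightarrow> (\<lambda>N. pr f d 0 N) \<longlonglongrightarrow> 0"
  using assms unfolding good_def by auto

lemma RR_bounds:
  assumes g: "good m f" and d: "digit_seq m c"
  shows "0 \<le> RR f c J M \<and> RR f c J M \<le> 1"
proof (induction M arbitrary: J)
  case 0 then show ?case by (simp add: RR_def)
next
  case (Suc M)
  define R where "R = RR f c (J+1) M"
  define a where "a = aQ f (c (J+1)) (J+1)"
  define b where "b = aQ f (Suc (c (J+1))) (J+1)"
  have cm: "c (J+1) \<le> m (J+1)" using d unfolding digit_seq_def by auto
  have a: "0 \<le> a" "a \<le> 1" unfolding a_def using goodD(1,2)[OF g, of "J+1" "c (J+1)"] cm by auto
  have b: "0 \<le> b" "b \<le> 1" unfolding b_def using goodD(1,2)[OF g, of "J+1" "Suc (c (J+1))"] cm by auto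
  have R: "0 \<le> R" "R \<le> 1" using Suc.IH[of "J+1"] unfolding R_def by auto
  have eq: "RR f c J (Suc M) = (1 - R) * a + R * b"
    unfolding RR_Suc R_def[symmetric] a_def b_def aQ_Suc by (simp add: algebra_simps)
  have "(1-R)*a \<le> (1-R)*1" by (rule mult_left_mono) (use a R in auto)
  moreover have "R*b \<le> R*1" by (rule mult_left_mono) (use b R in auto)
  moreover have "0 \<le> (1-R)*a" "0 \<le> R*b" using a b R by auto
  ultimately show ?case unfolding eq by auto
qed

lemma pr_tail_lim:
  assumes g: "good m f" and d: "digit_seq m c"
  shows "(\<lambda>N. pr f c J (J+N)) \<longlonglongrightarrow> 0"
proof -
  have nz: "pr f c 0 J \<noteq> 0"
    unfolding pr_def using goodD(4)[OF g] d unfolding digit_seq_def by (auto)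
  have "(\<lambda>N. pr f c 0 (N+J)) \<longlonglongrightarrow> 0"
    using LIMSEQ_ignore_initial_segment[OF goodD(5)[OF g d]] .
  then have "(\<lambda>N. pr f c 0 (N+J) / pr f c 0 J) \<longlonglongrightarrow> 0 / pr f c 0 J"
    by (intro tendsto_divide) (use nz in auto)
  moreover have "pr f c 0 (N+J) / pr f c 0 J = pr f c J (J+N)" for N
    using pr_split[of 0 J "J+N" f c] nz by (simp add: add.commute)
  ultimately show ?thesis by simp
qed

lemma sum_shift_ivl: "sum g {N0..<N0+M} = (\<Sum>i<M. g (N0+i))" for N0 M :: nat
  by (induction M) auto

lemma tg_shift: "tg f c J (N0+i) = pr f c J (J+N0) * tg f c (J+N0) i"
  unfolding tg_def using pr_split[of J "J+N0" "J+(N0+i)" f c]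
  by (simp add: algebra_simps)

lemma tg_summable:
  assumes g: "good m f" and d: "digit_seq m c"
  shows "summable (tg f c J)"
proof (rule summable_Cauchy'[where g = "\<lambda>N. \<bar>pr f c J (J+N)\<bar>"])
  show "(\<lambda>N. \<bar>pr f c J (J+N)\<bar>) \<longlonglongrightarrow> 0"
    using pr_tail_lim[OF g d] tendsto_rabs_zero by blast
  show "\<forall>\<^sub>F N0 in sequentially. \<forall>n\<ge>N0. norm (sum (tg f c J) {N0..<n}) \<le> \<bar>pr f c J (J+N0)\<bar>"
  proof (intro always_eventually allI impI)
    fix N0 n :: nat assume "N0 \<le> n"
    then obtain M where n: "n = N0 + M" using le_Suc_ex by blast
    have "sum (tg f c J) {N0..<n} = pr f c J (J+N0) * RR f c (J+N0) M"
      unfolding n sum_shift_ivl tg_shift RR_def by (simp add: sum_distrib_left)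
    moreover have "\<bar>RR f c (J+N0) M\<bar> \<le> 1" using RR_bounds[OF g d] by auto
    ultimately show "norm (sum (tg f c J) {N0..<n}) \<le> \<bar>pr f c J (J+N0)\<bar>"
      by (simp add: abs_mult mult_left_le)
  qed
qed


lemma TT_rec:
  assumes g: "good m f" and d: "digit_seq m c"
  shows "TT f c J = aQ f (c (J+1)) (J+1) + f (c (J+1)) (J+1) * TT f c (J+1)"
proof -
  have s: "summable (tg f c J)" "summable (tg f c (J+1))" using tg_summable[OF g d] by auto
  have "(\<Sum>n. tg f c J (Suc n)) = TT f c J - tg f c J 0"
    unfolding TT_def by (rule suminf_split_head[OF s(1)])
  moreover have "(\<Sum>n. tg f c J (Suc n)) = f (c (J+1)) (J+1) * TT f c (J+1)"
    unfolding tg_Suc TT_def using suminf_mult[OF s(2)] by simp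
  ultimately show ?thesis by (simp add: tg_0)
qed

lemma RR_lim:
  assumes g: "good m f" and d: "digit_seq m c"
  shows "(\<lambda>M. RR f c J M) \<longlonglongrightarrow> TT f c J"
  unfolding RR_def TT_def using summable_LIMSEQ[OF tg_summable[OF g d]] by simp

lemma TT_bounds:
  assumes g: "good m f" and d: "digit_seq m c"
  shows "0 \<le> TT f c J" "TT f c J \<le> 1"
proof -
  show "0 \<le> TT f c J"
    by (rule LIMSEQ_le_const[OF RR_lim[OF g d]]) (use RR_bounds[OF g d] in auto)
  show "TT f c J \<le> 1"
    by (rule LIMSEQ_le_const2[OF RR_lim[OF g d]]) (use RR_bounds[OF g d] in auto)
qed

lemma TT_diff:
  assumes g: "good m f" and d: "digit_seq m c" and d': "digit_seq m c'"
    and agree: "\<And>l. 1 \<le> l \<Longrightarrow> l \<le> J \<Longrightarrow> c l = c' l"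
  shows "TT f c 0 - TT f c' 0 = pr f c 0 J * (TT f c J - TT f c' J)"
  using agree
proof (induction J)
  case 0 then show ?case by simp
next
  case (Suc J)
  have e: "c (J+1) = c' (J+1)" using Suc.prems by auto
  have "TT f c J - TT f c' J = f (c (J+1)) (J+1) * (TT f c (J+1) - TT f c' (J+1))"
    using TT_rec[OF g d, of J] TT_rec[OF g d', of J] e by (simp add: algebra_simps)
  moreover have "pr f c 0 (Suc J) = pr f c 0 J * f (c (J+1)) (J+1)"
    using pr_Suc[of 0 J f c] by simp
  moreover have "TT f c 0 - TT f c' 0 = pr f c 0 J * (TT f c J - TT f c' J)"
    using Suc.IH Suc.prems by auto
  ultimately show ?case by (simp add: mult.assoc)
qed

lemma TT_zero_tail:
  assumes "\<And>l. l > J \<Longrightarrow> c l = 0"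
  shows "TT f c J = 0"
proof -
  have "tg f c J = (\<lambda>k. 0)" using assms by (auto simp: tg_def fun_eq_iff)
  then show ?thesis unfolding TT_def by simp
qed

lemma TT_max_tail:
  assumes g: "good m f" and d: "digit_seq m c" and t: "\<And>l. l > J \<Longrightarrow> c l = m l"
  shows "TT f c J = 1"
proof -
  have R: "RR f c J M = 1 - pr f c J (J+M)" for M
  proof (induction M)
    case 0 then show ?case by (simp add: RR_def)
  next
    case (Suc M)
    have c: "c (J+M+1) = m (J+M+1)" using t by auto
    have one: "aQ f (m (J+M+1)) (J+M+1) + f (m (J+M+1)) (J+M+1) = 1"
      using goodD(3)[OF g, of "J+M+1"] by (simp add: aQ_Suc)
    have "RR f c J (Suc M) = RR f c J M + tg f c J M" by (simp add: RR_def)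
    also have "\<dots> = 1 - pr f c J (J+M) * (1 - aQ f (m (J+M+1)) (J+M+1))"
      using Suc c by (simp add: tg_def algebra_simps)
    also have "\<dots> = 1 - pr f c J (J+M) * f (c (J+M+1)) (J+M+1)"
    proof -
      have "1 - aQ f (m (J+M+1)) (J+M+1) = f (c (J+M+1)) (J+M+1)" using one c by simp
      then show ?thesis by simp
    qed
    also have "\<dots> = 1 - pr f c J (J + Suc M)"
      using pr_Suc[of J "J+M" f c] by simp
    finally show ?case .
  qed
  have "(\<lambda>M. 1 - pr f c J (J+M)) \<longlonglongrightarrow> 1 - 0"
    by (intro tendsto_diff tendsto_const pr_tail_lim[OF g d])
  then have "(\<lambda>M. RR f c J M) \<longlonglongrightarrow> 1" unfolding R by simp
  then show ?thesis using RR_lim[OF g d] LIMSEQ_unique by blast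
qed

lemma DeltaQ_TT: "DeltaQ f c = TT f c 0"
  unfolding DeltaQ_def TT_def tg_def pr_0 by simp

lemma DeltaQ_cong: "(\<And>k. k \<ge> 1 \<Longrightarrow> c k = c' k) \<Longrightarrow> DeltaQ f c = DeltaQ f c'"
  unfolding DeltaQ_def
  by (intro arg_cong[where f=suminf] ext arg_cong2[where f="(*)"] prod.cong) auto


lemma aQ_add: "c \<le> c' \<Longrightarrow> aQ f c' n = aQ f c n + sum (\<lambda>i. f i n) {c..<c'}"
proof (induction c' rule: dec_induct)
  case base then show ?case by simp
next
  case (step k) then show ?case by (simp add: aQ_Suc sum.atLeastLessThan_Suc)
qed

locale qpos_loc =
  fixes m :: "nat \<Rightarrow> nat" and q :: "nat \<Rightarrow> nat \<Rightarrow> real"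
  assumes gq: "good m q" and qpos: "\<And>n i. n \<ge> 1 \<Longrightarrow> i \<le> m n \<Longrightarrow> q i n > 0"
begin

lemma qnn: "n \<ge> 1 \<Longrightarrow> i < Suc (m n) \<Longrightarrow> 0 \<le> q i n"
  using qpos[of n i] by simp

lemma aQ_ge0: "n \<ge> 1 \<Longrightarrow> 1 \<le> c \<Longrightarrow> c \<le> m n + 1 \<Longrightarrow> q 0 n \<le> aQ q c n"
  unfolding aQ_def
  by (rule member_le_sum[where f="\<lambda>i. q i n"]) (auto intro: qnn)

lemma aQ_strict: assumes "n \<ge> 1" "Suc c < c'" "c' \<le> m n + 1"
  shows "aQ q (Suc c) n < aQ q c' n"
proof -
  have "aQ q c' n = aQ q (Suc c) n + sum (\<lambda>i. q i n) {Suc c..<c'}"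
    using aQ_add[of "Suc c" c' q n] assms by simp
  moreover have "q (Suc c) n \<le> sum (\<lambda>i. q i n) {Suc c..<c'}"
    by (rule member_le_sum[where f="\<lambda>i. q i n"]) (use assms in \<open>auto intro: qnn\<close>)
  moreover have "q (Suc c) n > 0" using assms by (intro qpos) auto
  ultimately show ?thesis by simp
qed

lemma aQ_mono: assumes "n \<ge> 1" "c \<le> c'" "c' \<le> m n + 1"
  shows "aQ q c n \<le> aQ q c' n"
proof -
  have "aQ q c' n = aQ q c n + sum (\<lambda>i. q i n) {c..<c'}"
    using aQ_add[of c c' q n] assms by simp
  moreover have "0 \<le> sum (\<lambda>i. q i n) {c..<c'}"
    by (rule sum_nonneg) (use assms in \<open>auto intro: qnn\<close>)
  ultimately show ?thesis by simp
qed

lemma TT_q_zero: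
  assumes d: "digit_seq m c" and z: "TT q c J = 0"
  shows "c (J+k+1) = 0"
  using z
proof (induction k arbitrary: J)
  case 0
  have cm: "c (J+1) \<le> m (J+1)" using d unfolding digit_seq_def by auto
  have a: "0 \<le> aQ q (c (J+1)) (J+1)" using goodD(1)[OF gq, of "J+1"] cm by auto
  have qq: "q (c (J+1)) (J+1) > 0" using qpos cm by auto
  have t: "0 \<le> TT q c (J+1)" using TT_bounds[OF gq d] by auto
  have "aQ q (c (J+1)) (J+1) + q (c (J+1)) (J+1) * TT q c (J+1) = 0"
    using TT_rec[OF gq d, of J] 0 by simp
  then have "aQ q (c (J+1)) (J+1) = 0" using a qq t
    by (smt (verit) mult_nonneg_nonneg)
  moreover have "c (J+1) \<ge> 1 \<Longrightarrow> aQ q (c (J+1)) (J+1) > 0"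
    using aQ_ge0[of "J+1" "c (J+1)"] qpos[of "J+1" 0] cm by force
  ultimately show ?case by force
next
  case (Suc k)
  have cm: "c (J+1) \<le> m (J+1)" using d unfolding digit_seq_def by auto
  have a: "0 \<le> aQ q (c (J+1)) (J+1)" using goodD(1)[OF gq, of "J+1"] cm by auto
  have qq: "q (c (J+1)) (J+1) > 0" using qpos cm by auto
  have t: "0 \<le> TT q c (J+1)" using TT_bounds[OF gq d] by auto
  have "aQ q (c (J+1)) (J+1) + q (c (J+1)) (J+1) * TT q c (J+1) = 0"
    using TT_rec[OF gq d, of J] Suc.prems by simp
  then have "TT q c (J+1) = 0" using a qq t
    by (smt (verit) mult_nonneg_nonneg mult_pos_pos)
  then have "c (J + 1 + k + 1) = 0" using Suc.IH by blast
  then show ?case by (simp add: add.commute add.left_commute)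
qed

lemma TT_q_one_step:
  assumes d: "digit_seq m c" and o: "TT q c J = 1"
  shows "c (J+1) = m (J+1) \<and> TT q c (J+1) = 1"
proof -
  have cm: "c (J+1) \<le> m (J+1)" using d unfolding digit_seq_def by auto
  have qq: "q (c (J+1)) (J+1) > 0" using qpos cm by auto
  have t: "TT q c (J+1) \<le> 1" using TT_bounds[OF gq d] by auto
  have e: "aQ q (c (J+1)) (J+1) + q (c (J+1)) (J+1) * TT q c (J+1) = 1"
    using TT_rec[OF gq d, of J] o by simp
  have "q (c (J+1)) (J+1) * TT q c (J+1) \<le> q (c (J+1)) (J+1)"
    using mult_left_mono[OF t, of "q (c (J+1)) (J+1)"] qq by simp
  then have ge: "1 \<le> aQ q (Suc (c (J+1))) (J+1)" using e by (simp add: aQ_Suc)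
  have cme: "c (J+1) = m (J+1)"
  proof (rule ccontr)
    assume "c (J+1) \<noteq> m (J+1)"
    then have "aQ q (Suc (c (J+1))) (J+1) < aQ q (Suc (m (J+1))) (J+1)"
      using aQ_strict[of "J+1" "c (J+1)" "Suc (m (J+1))"] cm by simp
    then show False using ge goodD(3)[OF gq, of "J+1"] by simp
  qed
  have "aQ q (m (J+1)) (J+1) + q (m (J+1)) (J+1) = 1"
    using goodD(3)[OF gq, of "J+1"] by (simp add: aQ_Suc)
  then have "q (m (J+1)) (J+1) * TT q c (J+1) = q (m (J+1)) (J+1) * 1" using e unfolding cme by linarith
  then show ?thesis using qq cme by (simp only: mult_left_cancel)
qed

lemma TT_q_one:
  assumes d: "digit_seq m c" and o: "TT q c J = 1"
  shows "c (J+k+1) = m (J+k+1)"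
  using o
proof (induction k arbitrary: J)
  case 0 then show ?case using TT_q_one_step[OF d] by simp
next
  case (Suc k)
  then have "TT q c (J+1) = 1" using TT_q_one_step[OF d] by simp
  then have "c (J + 1 + k + 1) = m (J + 1 + k + 1)" using Suc.IH by blast
  then show ?case by (simp add: add.commute add.left_commute)
qed

lemma first_digit:
  assumes d: "digit_seq m c" and d': "digit_seq m c'" and eq: "TT q c J = TT q c' J"
    and lt: "c (J+1) < c' (J+1)"
  shows "c' (J+1) = Suc (c (J+1)) \<and> TT q c (J+1) = 1 \<and> TT q c' (J+1) = 0"
proof -
  define a where "a = aQ q (c (J+1)) (J+1)"
  define A where "A = aQ q (c' (J+1)) (J+1)"
  define r where "r = q (c (J+1)) (J+1)"
  define r' where "r' = q (c' (J+1)) (J+1)"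
  define u where "u = TT q c (J+1)"
  define u' where "u' = TT q c' (J+1)"
  have cm: "c' (J+1) \<le> m (J+1)" using d' unfolding digit_seq_def by auto
  have r: "r > 0" "r' > 0" unfolding r_def r'_def using qpos cm lt by auto
  have u: "0 \<le> u" "u \<le> 1" "0 \<le> u'" "u' \<le> 1" unfolding u_def u'_def using TT_bounds[OF gq d] TT_bounds[OF gq d'] by auto
  have e: "a + r * u = A + r' * u'" using eq TT_rec[OF gq d, of J] TT_rec[OF gq d', of J]
    unfolding a_def A_def r_def r'_def u_def u'_def by simp
  have m1: "a + r \<le> A" unfolding a_def r_def A_def
    using aQ_mono[of "J+1" "Suc (c (J+1))" "c' (J+1)"] lt cm by (simp add: aQ_Suc)
  have "r * u \<le> r" using mult_left_mono[OF u(2), of r] r by simp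
  moreover have "0 \<le> r' * u'" using r u by simp
  ultimately have eqs: "r * u = r" "a + r = A" "r' * u' = 0" using e m1 by linarith+
  have "u = 1" using eqs(1) r by simp
  moreover have "u' = 0" using eqs(3) r by simp
  moreover have "c' (J+1) = Suc (c (J+1))"
  proof (rule ccontr)
    assume "c' (J+1) \<noteq> Suc (c (J+1))"
    then have "aQ q (Suc (c (J+1))) (J+1) < A" unfolding A_def
      using aQ_strict[of "J+1" "c (J+1)" "c' (J+1)"] lt cm by simp
    then show False using eqs(2) unfolding a_def r_def by (simp add: aQ_Suc)
  qed
  ultimately show ?thesis unfolding u_def u'_def by simp
qed

lemma key:
  assumes gp: "good m p" and d: "digit_seq m c" and d': "digit_seq m c'"
    and eq: "DeltaQ q c = DeltaQ q c'"
  shows "DeltaQ p c = DeltaQ p c'"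
proof (cases "\<forall>k\<ge>1. c k = c' k")
  case True then show ?thesis by (intro DeltaQ_cong) auto
next
  case False
  then have "\<exists>k. k \<ge> 1 \<and> c k \<noteq> c' k" by auto
  then obtain j where j: "j \<ge> 1" "c j \<noteq> c' j" and min: "\<And>i. i < j \<Longrightarrow> \<not> (i \<ge> 1 \<and> c i \<noteq> c' i)"
    using exists_least_iff[of "\<lambda>k. k \<ge> 1 \<and> c k \<noteq> c' k"] by blast
  define J where "J = j - 1"
  have jJ: "j = J + 1" using j unfolding J_def by simp
  have agree: "\<And>l. 1 \<le> l \<Longrightarrow> l \<le> J \<Longrightarrow> c l = c' l"
  proof -
    fix l assume "1 \<le> l" "l \<le> J"
    then have "l < j" using jJ by simp
    then show "c l = c' l" using min[of l] \<open>1 \<le> l\<close> by simp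
  qed
  have prpos: "pr q c 0 J > 0" unfolding pr_def using d qpos unfolding digit_seq_def
    by (intro prod_pos) auto
  have "0 = pr q c 0 J * (TT q c J - TT q c' J)"
    using TT_diff[OF gq d d' agree] eq by (simp add: DeltaQ_TT)
  then have tq: "TT q c J = TT q c' J" using prpos by simp
  have tail: "TT p c J = TT p c' J"
  proof -
    have gen: "TT p e J = TT p e' J" if e: "digit_seq m e" "digit_seq m e'" "TT q e J = TT q e' J"
      "e (J+1) < e' (J+1)" for e e'
    proof -
      have fd: "e' (J+1) = Suc (e (J+1))" "TT q e (J+1) = 1" "TT q e' (J+1) = 0"
        using first_digit[OF e] by auto
      have "\<And>l. l > J+1 \<Longrightarrow> e l = m l"
      proof -
        fix l assume "l > J+1"
        then have eq: "J+1+(l-J-2)+1 = l" by simp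
        show "e l = m l" using TT_q_one[OF e(1) fd(2), of "l-J-2"] unfolding eq .
      qed
      then have o: "TT p e (J+1) = 1" by (rule TT_max_tail[OF gp e(1)])
      have "\<And>l. l > J+1 \<Longrightarrow> e' l = 0"
      proof -
        fix l assume "l > J+1"
        then have eq: "J+1+(l-J-2)+1 = l" by simp
        show "e' l = 0" using TT_q_zero[OF e(2) fd(3), of "l-J-2"] unfolding eq .
      qed
      then have z: "TT p e' (J+1) = 0" by (rule TT_zero_tail)
      show ?thesis using TT_rec[OF gp e(1), of J] TT_rec[OF gp e(2), of J] o z fd(1)
        by (simp add: aQ_Suc)
    qed
    have "c (J+1) \<noteq> c' (J+1)" using j jJ by simp
    then show ?thesis using gen[OF d d' tq] gen[OF d' d tq[symmetric]] by (cases "c (J+1) < c' (J+1)") auto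
  qed
  have "TT p c 0 - TT p c' 0 = pr p c 0 J * (TT p c J - TT p c' J)"
    by (rule TT_diff[OF gp d d']) (rule agree)
  then show ?thesis using tail by (simp add: DeltaQ_TT)
qed

end

lemma nd_valid: "digit_seq m d \<Longrightarrow> digit_seq m (nega_digits m d)"
  unfolding digit_seq_def nega_digits_def by auto

lemma nd_invol: "digit_seq m c \<Longrightarrow> k \<ge> 1 \<Longrightarrow> nega_digits m (nega_digits m c) k = c k"
  unfolding digit_seq_def nega_digits_def by auto

lemma F_series_eq: "F_series m p d = DeltaQ p (nega_digits m d)"
proof -
  have a: "tilde_beta m p (d k) k = aQ p (nega_digits m d k) k" for k
    unfolding tilde_beta_def nega_digits_def betaP_def aQ_def by auto
  have b: "tilde_p m p (d k) k = p (nega_digits m d k) k" for k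
    unfolding tilde_p_def nega_digits_def by auto
  show ?thesis unfolding F_series_def DeltaQ_def a b ..
qed

context qpos_loc begin

lemma FFval:
  assumes gp: "good m p" and c: "digit_seq m c"
  shows "FF m q p (DeltaQ q c) = DeltaQ p c"
proof -
  define P where "P = (\<lambda>d. digit_seq m d \<and> nega_DeltaQ m q d = DeltaQ q c)"
  have "P (nega_digits m c)"
    unfolding P_def nega_DeltaQ_def using nd_valid[OF c] nd_invol[OF c]
    by (auto intro: DeltaQ_cong)
  then have Pd: "P (SOME d. P d)" by (metis someI)
  define d where "d = (SOME d. P d)"
  have "P d" using Pd unfolding d_def .
  then have dd: "digit_seq m d" "DeltaQ q (nega_digits m d) = DeltaQ q c"
    unfolding P_def nega_DeltaQ_def by auto
  have "FF m q p (DeltaQ q c) = F_series m p d"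
    unfolding FF_def d_def P_def ..
  also have "\<dots> = DeltaQ p (nega_digits m d)" by (rule F_series_eq)
  also have "\<dots> = DeltaQ p c" by (rule key[OF gp nd_valid[OF dd(1)] c dd(2)])
  finally show ?thesis .
qed

end

lemma two_rep:
  assumes gf: "good m f" and N: "N \<ge> 1" and E: "1 \<le> E" "E \<le> m N"
    and pre: "\<And>j. 1 \<le> j \<Longrightarrow> j < N \<Longrightarrow> c0 j \<le> m j"
    and e_def: "e = (\<lambda>j. if j < N then c0 j else if j = N then E else 0)"
    and e'_def: "e' = (\<lambda>j. if j < N then c0 j else if j = N then E - 1 else m j)"
  shows "digit_seq m e" "digit_seq m e'" "DeltaQ f e = DeltaQ f e'"
proof -
  show ve: "digit_seq m e" unfolding digit_seq_def e_def using pre E by auto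
  show ve': "digit_seq m e'" unfolding digit_seq_def e'_def using pre E by auto
  define J where "J = N - 1"
  have NJ: "N = J + 1" using N unfolding J_def by simp
  have agree: "\<And>l. 1 \<le> l \<Longrightarrow> l \<le> J \<Longrightarrow> e l = e' l" unfolding e_def e'_def NJ by auto
  have t1: "TT f e N = 0" by (rule TT_zero_tail) (simp add: e_def)
  have t2: "TT f e' N = 1" by (rule TT_max_tail[OF gf ve']) (simp add: e'_def)
  have eN: "e N = E" "e' N = E - 1" unfolding e_def e'_def by auto
  have "TT f e J = aQ f E N" using TT_rec[OF gf ve, of J] t1 unfolding NJ[symmetric] eN by simp
  moreover have "TT f e' J = aQ f (E - 1) N + f (E - 1) N" using TT_rec[OF gf ve', of J] t2
    unfolding NJ[symmetric] eN by simp
  moreover have "aQ f E N = aQ f (E - 1) N + f (E - 1) N" using aQ_Suc[of f "E - 1" N] E by simp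
  ultimately have "TT f e J = TT f e' J" by simp
  moreover have "TT f e 0 - TT f e' 0 = pr f e 0 J * (TT f e J - TT f e' J)"
    by (rule TT_diff[OF gf ve ve']) (rule agree)
  ultimately show "DeltaQ f e = DeltaQ f e'" by (simp add: DeltaQ_TT)
qed

context qpos_loc begin

lemma prq_pos: "digit_seq m g \<Longrightarrow> pr q g a b > 0"
  unfolding pr_def digit_seq_def by (intro prod_pos) (auto intro: qpos)

lemma main_core:
  assumes gp: "good m p" and N: "N \<ge> 1" and E: "1 \<le> E" "E \<le> m N"
    and pre: "\<And>j. 1 \<le> j \<Longrightarrow> j < N \<Longrightarrow> c0 j \<le> m j"
    and sgn: "p E N * p (E - 1) N < 0"
    and p0: "\<And>k. k \<ge> 1 \<Longrightarrow> p 0 k > 0" and pm: "\<And>k. k \<ge> 1 \<Longrightarrow> p (m k) k > 0"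
    and L0: "L0 \<noteq> 0" "(\<lambda>K. \<Prod>k=1..K. p 0 k / q 0 k) \<longlonglongrightarrow> L0"
    and Lm: "Lm \<noteq> 0" "(\<lambda>K. \<Prod>k=1..K. p (m k) k / q (m k) k) \<longlonglongrightarrow> Lm"
    and e_def: "e = (\<lambda>j. if j < N then c0 j else if j = N then E else 0)"
    and e'_def: "e' = (\<lambda>j. if j < N then c0 j else if j = N then E - 1 else m j)"
    and x: "x = DeltaQ q e"
  shows "\<not> (\<exists>D. (FF m q p has_real_derivative D) (at x within {0..1}))
         \<and> \<not> has_infinite_derivative (FF m q p) x {0..1}"
proof -
  have ve: "digit_seq m e" and ve': "digit_seq m e'" and xe': "x = DeltaQ q e'"
    using two_rep[OF gq N E pre e_def e'_def] x by auto
  have Fe: "FF m q p x = DeltaQ p e" using FFval[OF gp ve] x by simp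
  have Fe': "DeltaQ p e = DeltaQ p e'" using two_rep[OF gp N E pre e_def e'_def] by simp
  define W where "W g K = pr p g 0 K / pr q g 0 K" for g K
  define z0 where "z0 = (\<lambda>l::nat. 0::nat)"
  define ey where "ey k = (\<lambda>j. if j \<le> N + k then e j else m j)" for k
  define ez where "ez k = (\<lambda>j. if j \<le> N + k then e' j else 0)" for k
  define g where "g t = (FF m q p t - FF m q p x) / (t - x)" for t
  define y where "y k = DeltaQ q (ey k)" for k
  define z where "z k = DeltaQ q (ez k)" for k
  have vey: "digit_seq m (ey k)" for k using ve unfolding ey_def digit_seq_def by auto
  have vez: "digit_seq m (ez k)" for k using ve' unfolding ez_def digit_seq_def by auto
  have vz0: "digit_seq m z0" unfolding z0_def digit_seq_def by auto
  have vm: "digit_seq m m" unfolding digit_seq_def by auto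
  have etail: "\<And>l. l > N \<Longrightarrow> e l = 0" unfolding e_def by auto
  have e'tail: "\<And>l. l > N \<Longrightarrow> e' l = m l" unfolding e'_def by auto
  have ydiff: "DeltaQ f (ey k) - DeltaQ f e = pr f e 0 (N+k)" if gf: "good m f" for f k
  proof -
    have "TT f (ey k) 0 - TT f e 0 = pr f (ey k) 0 (N+k) * (TT f (ey k) (N+k) - TT f e (N+k))"
      by (rule TT_diff[OF gf vey ve]) (simp add: ey_def)
    moreover have "TT f (ey k) (N+k) = 1" by (rule TT_max_tail[OF gf vey]) (simp add: ey_def)
    moreover have "TT f e (N+k) = 0" by (rule TT_zero_tail) (simp add: etail)
    moreover have "pr f (ey k) 0 (N+k) = pr f e 0 (N+k)" by (rule pr_cong) (simp add: ey_def)
    ultimately show ?thesis by (simp add: DeltaQ_TT)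
  qed
  have zdiff: "DeltaQ f e' - DeltaQ f (ez k) = pr f e' 0 (N+k)" if gf: "good m f" for f k
  proof -
    have "TT f e' 0 - TT f (ez k) 0 = pr f e' 0 (N+k) * (TT f e' (N+k) - TT f (ez k) (N+k))"
      by (rule TT_diff[OF gf ve' vez]) (simp add: ez_def)
    moreover have "TT f e' (N+k) = 1" by (rule TT_max_tail[OF gf ve']) (simp add: e'tail)
    moreover have "TT f (ez k) (N+k) = 0" by (rule TT_zero_tail) (simp add: ez_def)
    ultimately show ?thesis by (simp add: DeltaQ_TT)
  qed
  have gy: "g (y k) = W e (N+k)" for k
  proof -
    have "y k - x = pr q e 0 (N+k)" using ydiff[OF gq] x unfolding y_def by simp
    moreover have "FF m q p (y k) - FF m q p x = pr p e 0 (N+k)"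
      using ydiff[OF gp] Fe FFval[OF gp vey] unfolding y_def by simp
    ultimately show ?thesis unfolding g_def W_def by simp
  qed
  have gz: "g (z k) = W e' (N+k)" for k
  proof -
    have "z k - x = - pr q e' 0 (N+k)" using zdiff[OF gq, of k] xe' unfolding z_def by linarith
    moreover have "FF m q p (z k) - FF m q p x = - pr p e' 0 (N+k)"
      using zdiff[OF gp, of k] Fe Fe' FFval[OF gp vez, of k] unfolding z_def by linarith
    ultimately show ?thesis unfolding g_def W_def by simp
  qed
  have prz0: "pr p z0 a b > 0" for a b unfolding pr_def z0_def by (intro prod_pos) (auto intro: p0)
  have prm: "pr p m a b > 0" for a b unfolding pr_def by (intro prod_pos) (auto intro: pm)
  have Wz0: "W z0 K = (\<Prod>k=1..K. p 0 k / q 0 k)" for K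
    unfolding W_def pr_0 z0_def by (simp add: prod_dividef)
  have Wm: "W m K = (\<Prod>k=1..K. p (m k) k / q (m k) k)" for K
    unfolding W_def pr_0 by (simp add: prod_dividef)
  have Wz0pos: "W z0 K > 0" for K unfolding W_def using prz0 prq_pos[OF vz0] by simp
  have Wmpos: "W m K > 0" for K unfolding W_def using prm prq_pos[OF vm] by simp
  have Wshift: "W h (N+k) = (W h N / W g N) * W g (N+k)"
    if vh: "digit_seq m h" and vg: "digit_seq m g" and ag: "\<And>l. l > N \<Longrightarrow> h l = g l"
      and nz: "\<And>a b. pr p g a b \<noteq> 0" for h g k
  proof -
    have s1: "pr f h 0 (N+k) = pr f h 0 N * pr f g N (N+k)" for f
      using pr_split[of 0 N "N+k" f h] pr_cong[of N "N+k" h g f] ag by simp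
    have s2: "pr f g 0 (N+k) = pr f g 0 N * pr f g N (N+k)" for f
      using pr_split[of 0 N "N+k" f g] by simp
    have q1: "pr q h 0 N > 0" "pr q g 0 N > 0" "pr q g N (N+k) > 0"
      using prq_pos[OF vh] prq_pos[OF vg] by auto
    show ?thesis unfolding W_def s1 s2 using q1 nz[of 0 N] nz[of N "N+k"]
      by (simp add: field_simps)
  qed
  define R where "R = (W e N / W z0 N) * L0"
  define L where "L = (W e' N / W m N) * Lm"
  have yq: "(\<lambda>k. g (y k)) \<longlonglongrightarrow> R"
  proof -
    have "(\<lambda>k. W z0 (k + N)) \<longlonglongrightarrow> L0" unfolding Wz0 by (rule LIMSEQ_ignore_initial_segment[OF L0(2)])
    then have "(\<lambda>k. (W e N / W z0 N) * W z0 (N + k)) \<longlonglongrightarrow> R"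
      unfolding R_def by (intro tendsto_mult tendsto_const) (simp add: add.commute)
    moreover have "g (y k) = (W e N / W z0 N) * W z0 (N + k)" for k
      unfolding gy by (rule Wshift[OF ve vz0]) (use etail prz0 in \<open>auto simp: z0_def less_le\<close>)
    ultimately show ?thesis by simp
  qed
  have zq: "(\<lambda>k. g (z k)) \<longlonglongrightarrow> L"
  proof -
    have "(\<lambda>k. W m (k + N)) \<longlonglongrightarrow> Lm" unfolding Wm by (rule LIMSEQ_ignore_initial_segment[OF Lm(2)])
    then have "(\<lambda>k. (W e' N / W m N) * W m (N + k)) \<longlonglongrightarrow> L"
      unfolding L_def by (intro tendsto_mult tendsto_const) (simp add: add.commute)
    moreover have "g (z k) = (W e' N / W m N) * W m (N + k)" for k
      unfolding gz by (rule Wshift[OF ve' vm]) (use e'tail prm in \<open>auto simp: less_le\<close>)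
    ultimately show ?thesis by simp
  qed
  have L0pos: "L0 > 0"
  proof -
    have "0 \<le> L0" by (rule LIMSEQ_le_const[OF L0(2)]) (use Wz0pos Wz0 in \<open>auto intro: less_imp_le\<close>)
    then show ?thesis using L0(1) by simp
  qed
  have Lmpos: "Lm > 0"
  proof -
    have "0 \<le> Lm" by (rule LIMSEQ_le_const[OF Lm(2)]) (use Wmpos Wm in \<open>auto intro: less_imp_le\<close>)
    then show ?thesis using Lm(1) by simp
  qed
  have WW: "W e N * W e' N < 0"
  proof -
    define J where "J = N - 1"
    have NJ: "N = Suc J" using N unfolding J_def by simp
    have eN: "e N = E" "e' N = E - 1" unfolding e_def e'_def by auto
    have b1: "pr p e 0 N = pr p e 0 J * p (e N) N" unfolding NJ by (rule pr_Suc) simp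
    have b2: "pr p e' 0 N = pr p e' 0 J * p (e' N) N" unfolding NJ by (rule pr_Suc) simp
    have b3: "pr p e' 0 J = pr p e 0 J" by (rule pr_cong) (simp add: e_def e'_def NJ)
    have a1: "pr p e 0 N = pr p e 0 J * p E N" using b1 eN by simp
    have a2: "pr p e' 0 N = pr p e 0 J * p (E - 1) N" using b2 b3 eN by simp
    have nz: "pr p e 0 J \<noteq> 0" unfolding pr_def using goodD(4)[OF gp] ve
      unfolding digit_seq_def by auto
    have "pr p e 0 N * pr p e' 0 N = (pr p e 0 J)^2 * (p E N * p (E - 1) N)"
      unfolding a1 a2 by (simp add: power2_eq_square algebra_simps)
    also have "\<dots> < 0" using sgn nz by (simp add: mult_pos_neg)
    finally have "pr p e 0 N * pr p e' 0 N < 0" .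
    moreover have "pr q e 0 N * pr q e' 0 N > 0" using prq_pos[OF ve] prq_pos[OF ve'] by simp
    ultimately show ?thesis unfolding W_def by (simp add: divide_neg_pos)
  qed
  have RL: "R * L < 0"
  proof -
    have eq: "R * L = (W e N * W e' N) * ((L0 * Lm) / (W z0 N * W m N))"
      unfolding R_def L_def by (simp add: field_simps)
    have P: "(L0 * Lm) / (W z0 N * W m N) > 0" using L0pos Lmpos Wz0pos Wmpos by simp
    show ?thesis unfolding eq using mult_neg_pos[OF WW P] .
  qed
  have yfl: "filterlim y (at x within {0..1}) sequentially"
  proof (subst filterlim_at, rule conjI[OF always_eventually])
    show "\<forall>k. y k \<in> {0..1} \<and> y k \<noteq> x"
    proof
    fix k
    have "y k = x + pr q e 0 (N+k)" using ydiff[OF gq, of k] x unfolding y_def by linarith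
    moreover have "0 \<le> y k" "y k \<le> 1" unfolding y_def DeltaQ_TT using TT_bounds[OF gq vey] by auto
    ultimately show "y k \<in> {0..1} \<and> y k \<noteq> x" using prq_pos[OF ve, of 0 "N+k"] by auto
  qed
  next
    have "(\<lambda>k. pr q e 0 (k + N)) \<longlonglongrightarrow> 0" by (rule LIMSEQ_ignore_initial_segment[OF goodD(5)[OF gq ve]])
    then have "(\<lambda>k. x + pr q e 0 (N + k)) \<longlonglongrightarrow> x + 0" by (intro tendsto_add tendsto_const) (simp add: add.commute)
    moreover have "y = (\<lambda>k. x + pr q e 0 (N+k))"
    proof (rule ext)
      fix k show "y k = x + pr q e 0 (N+k)" using ydiff[OF gq, of k] x unfolding y_def by linarith
    qed
    ultimately show "y \<longlonglongrightarrow> x" by simp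
  qed
  have zfl: "filterlim z (at x within {0..1}) sequentially"
  proof (subst filterlim_at, rule conjI[OF always_eventually])
    show "\<forall>k. z k \<in> {0..1} \<and> z k \<noteq> x"
    proof
    fix k
    have "z k = x - pr q e' 0 (N+k)" using zdiff[OF gq, of k] xe' unfolding z_def by linarith
    moreover have "0 \<le> z k" "z k \<le> 1" unfolding z_def DeltaQ_TT using TT_bounds[OF gq vez] by auto
    ultimately show "z k \<in> {0..1} \<and> z k \<noteq> x" using prq_pos[OF ve', of 0 "N+k"] by auto
  qed
  next
    have "(\<lambda>k. pr q e' 0 (k + N)) \<longlonglongrightarrow> 0" by (rule LIMSEQ_ignore_initial_segment[OF goodD(5)[OF gq ve']])
    then have "(\<lambda>k. x - pr q e' 0 (N + k)) \<longlonglongrightarrow> x - 0" by (intro tendsto_diff tendsto_const) (simp add: add.commute)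
    moreover have "z = (\<lambda>k. x - pr q e' 0 (N+k))"
    proof (rule ext)
      fix k show "z k = x - pr q e' 0 (N+k)" using zdiff[OF gq, of k] xe' unfolding z_def by linarith
    qed
    ultimately show "z \<longlonglongrightarrow> x" by simp
  qed
  have nofin: "\<not> (\<exists>D. (FF m q p has_real_derivative D) (at x within {0..1}))"
  proof
    assume "\<exists>D. (FF m q p has_real_derivative D) (at x within {0..1})"
    then obtain D where "(FF m q p has_real_derivative D) (at x within {0..1})" by blast
    then have gl: "(g \<longlongrightarrow> D) (at x within {0..1})"
      unfolding has_field_derivative_iff g_def by simp
    have "(\<lambda>k. g (y k)) \<longlonglongrightarrow> D" using filterlim_compose[OF gl yfl] by simp
    then have "D = R" using yq LIMSEQ_unique by blast
    moreover have "(\<lambda>k. g (z k)) \<longlonglongrightarrow> D" using filterlim_compose[OF gl zfl] by simp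
    then have "D = L" using zq LIMSEQ_unique by blast
    ultimately have "R * L = R * R" by simp
    then show False using RL by (metis not_square_less_zero)
  qed
  have noinf: "\<not> has_infinite_derivative (FF m q p) x {0..1}"
  proof
    assume "has_infinite_derivative (FF m q p) x {0..1}"
    then have "filterlim g at_top (at x within {0..1}) \<or> filterlim g at_bot (at x within {0..1})"
      unfolding has_infinite_derivative_def g_def by simp
    then have "filterlim g at_infinity (at x within {0..1})"
      using filterlim_mono[OF _ at_top_le_at_infinity order_refl]
        filterlim_mono[OF _ at_bot_le_at_infinity order_refl] by blast
    then have "filterlim (\<lambda>k. g (y k)) at_infinity sequentially" using filterlim_compose[OF _ yfl] by blast
    then show False using not_tendsto_and_filterlim_at_infinity[OF trivial_limit_sequentially yq] by blast
  qed
  show ?thesis using nofin noinf by blast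
qed

end


theorem mainTheorem11:
  fixes m :: "nat \<Rightarrow> nat" and q p :: "nat \<Rightarrow> nat \<Rightarrow> real"
  assumes q_pos: "\<And>n i. n \<ge> 1 \<Longrightarrow> i \<le> m n \<Longrightarrow> q i n > 0"
    and q_sum: "\<And>n. n \<ge> 1 \<Longrightarrow> (\<Sum>i\<le>m n. q i n) = 1"
    and q_prod: "\<And>d. digit_seq m d \<Longrightarrow> (\<lambda>n. \<Prod>k=1..n. q (d k) k) \<longlonglongrightarrow> 0"
    and p_range: "\<And>n i. n \<ge> 1 \<Longrightarrow> i \<le> m n \<Longrightarrow> -1 < p i n \<and> p i n < 1"
    and p_sum: "\<And>n. n \<ge> 1 \<Longrightarrow> (\<Sum>i\<le>m n. p i n) = 1"
    and p_prod: "\<And>d. digit_seq m d \<Longrightarrow> (\<lambda>n. \<Prod>k=1..n. \<bar>p (d k) k\<bar>) \<longlonglongrightarrow> 0"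
    and p_partial: "\<And>n c. n \<ge> 1 \<Longrightarrow> 1 \<le> c \<Longrightarrow> c \<le> m n \<Longrightarrow>
                      0 < (\<Sum>i<c. p i n) \<and> (\<Sum>i<c. p i n) < 1"
    and cond_i: "\<And>n c. n \<ge> 1 \<Longrightarrow> 1 \<le> c \<Longrightarrow> c \<le> m n \<Longrightarrow> p c n * p (c - 1) n < 0"
    and cond_ii0: "\<exists>L. L \<noteq> 0 \<and> (\<lambda>n. \<Prod>k=1..n. p 0 k / q 0 k) \<longlonglongrightarrow> L"
    and cond_iim: "\<exists>L. L \<noteq> 0 \<and> (\<lambda>n. \<Prod>k=1..n. p (m k) k / q (m k) k) \<longlonglongrightarrow> L"
    and x: "x \<in> nega_rational_points m q"
  shows "\<not> (\<exists>D. (FF m q p has_real_derivative D) (at x within {0..1}))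
         \<and> \<not> has_infinite_derivative (FF m q p) x {0..1}"
proof -
  have atM: "aQ f (Suc (m n)) n = (\<Sum>i\<le>m n. f i n)" for f n
    unfolding aQ_def by (simp add: lessThan_Suc_atMost)
  have gq: "good m q" unfolding good_def
  proof (intro conjI allI impI)
    fix n c assume n: "n \<ge> 1" and c: "c \<le> m n + 1"
    show "0 \<le> aQ q c n" unfolding aQ_def
      by (rule sum_nonneg) (use n c q_pos in \<open>auto intro: less_imp_le\<close>)
    have "aQ q c n \<le> aQ q (Suc (m n)) n" unfolding aQ_def
      by (rule sum_mono2) (use n c q_pos in \<open>auto intro: less_imp_le\<close>)
    then show "aQ q c n \<le> 1" using atM q_sum n by simp
  next
    fix n :: nat assume "n \<ge> 1" then show "aQ q (Suc (m n)) n = 1" using atM q_sum by simp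
  next
    fix n i assume "n \<ge> 1" "i \<le> m n" then show "q i n \<noteq> 0" using q_pos[of n i] by simp
  next
    fix d assume "digit_seq m d" then show "(\<lambda>N. pr q d 0 N) \<longlonglongrightarrow> 0" unfolding pr_0 by (rule q_prod)
  qed
  have gp: "good m p" unfolding good_def
  proof (intro conjI allI impI)
    fix n c assume n: "n \<ge> 1" and c: "c \<le> m n + 1"
    have "0 \<le> aQ p c n \<and> aQ p c n \<le> 1"
    proof (cases "c = 0")
      case True then show ?thesis by simp
    next
      case False
      show ?thesis
      proof (cases "c = Suc (m n)")
        case True then show ?thesis using atM p_sum n by simp
      next
        case False
        then have "1 \<le> c" "c \<le> m n" using \<open>c \<noteq> 0\<close> c by auto
        then show ?thesis using p_partial[OF n] unfolding aQ_def by (simp add: less_imp_le)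
      qed
    qed
    then show "0 \<le> aQ p c n" "aQ p c n \<le> 1" by auto
  next
    fix n :: nat assume "n \<ge> 1" then show "aQ p (Suc (m n)) n = 1" using atM p_sum by simp
  next
    fix n i assume n: "n \<ge> 1" and i: "i \<le> m n"
    show "p i n \<noteq> 0"
    proof (cases "m n = 0")
      case True then show ?thesis using p_sum[OF n] i by simp
    next
      case False
      show ?thesis
      proof (cases "i = 0")
        case True then show ?thesis using cond_i[OF n, of 1] False by auto
      next
        case False then show ?thesis using cond_i[OF n, of i] i by auto
      qed
    qed
  next
    fix d assume "digit_seq m d"
    then have "(\<lambda>N. \<bar>pr p d 0 N\<bar>) \<longlonglongrightarrow> 0" unfolding pr_0 abs_prod by (rule p_prod)
    then show "(\<lambda>N. pr p d 0 N) \<longlonglongrightarrow> 0" by (rule tendsto_rabs_zero_cancel)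
  qed
  interpret qpos_loc m q using gq q_pos by unfold_locales auto
  have p0: "p 0 k > 0" if k: "k \<ge> 1" for k
  proof (cases "m k = 0")
    case True then show ?thesis using p_sum[OF k] by simp
  next
    case False then show ?thesis using p_partial[OF k, of 1] by simp
  qed
  have pm: "p (m k) k > 0" if k: "k \<ge> 1" for k
  proof (cases "m k = 0")
    case True then show ?thesis using p_sum[OF k] by simp
  next
    case False
    have "(\<Sum>i\<le>m k. p i k) = (\<Sum>i<m k. p i k) + p (m k) k"
      by (simp add: lessThan_Suc_atMost[symmetric])
    then show ?thesis using p_partial[OF k, of "m k"] p_sum[OF k] False by simp
  qed
  obtain L0 where L0: "L0 \<noteq> 0" "(\<lambda>K. \<Prod>k=1..K. p 0 k / q 0 k) \<longlonglongrightarrow> L0" using cond_ii0 by blast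
  obtain Lm where Lm: "Lm \<noteq> 0" "(\<lambda>K. \<Prod>k=1..K. p (m k) k / q (m k) k) \<longlonglongrightarrow> Lm" using cond_iim by blast
  obtain d n where n: "n \<ge> 1" and dv: "digit_seq m d" and dn: "d n \<noteq> 0"
    and tl: "\<forall>k>n. d k = (if odd (k - n) then m k else 0)" and xd: "x = nega_DeltaQ m q d"
    using x unfolding nega_rational_points_def by blast
  define c0 where "c0 = nega_digits m d"
  have vc0: "digit_seq m c0" unfolding c0_def by (rule nd_valid[OF dv])
  have pre: "\<And>j. 1 \<le> j \<Longrightarrow> j < n \<Longrightarrow> c0 j \<le> m j" using vc0 unfolding digit_seq_def by auto
  have xc0: "x = DeltaQ q c0" unfolding xd nega_DeltaQ_def c0_def ..
  have dnm: "d n \<le> m n" using dv n unfolding digit_seq_def by auto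
  show ?thesis
  proof (cases "odd n")
    case True
    define E where "E = d n"
    define e where "e = (\<lambda>j. if j < n then c0 j else if j = n then E else 0)"
    define e' where "e' = (\<lambda>j. if j < n then c0 j else if j = n then E - 1 else m j)"
    have E: "1 \<le> E" "E \<le> m n" unfolding E_def using dn dnm by auto
    have "x = DeltaQ q e" unfolding xc0
    proof (rule DeltaQ_cong)
      fix k :: nat assume "k \<ge> 1"
      show "c0 k = e k"
      proof (cases "k > n")
        case True
        then show ?thesis using tl[rule_format, OF True] \<open>odd n\<close>
          unfolding c0_def e_def nega_digits_def by auto
      next
        case False
        then show ?thesis using \<open>odd n\<close> unfolding c0_def e_def E_def nega_digits_def by auto
      qed
    qed
    then show ?thesis
      using main_core[OF gp n E pre cond_i[OF n E] p0 pm L0 Lm e_def e'_def] by blast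
  next
    case False
    define E where "E = Suc (c0 n)"
    define e where "e = (\<lambda>j. if j < n then c0 j else if j = n then E else 0)"
    define e' where "e' = (\<lambda>j. if j < n then c0 j else if j = n then E - 1 else m j)"
    have c0n: "c0 n = m n - d n" unfolding c0_def nega_digits_def using False by simp
    have E: "1 \<le> E" "E \<le> m n" unfolding E_def c0n using dn dnm by auto
    have "x = DeltaQ q e'" unfolding xc0
    proof (rule DeltaQ_cong)
      fix k :: nat assume "k \<ge> 1"
      show "c0 k = e' k"
      proof (cases "k > n")
        case True
        then show ?thesis using tl[rule_format, OF True] False
          unfolding c0_def e'_def nega_digits_def by auto
      next
        case False
        then show ?thesis unfolding e'_def E_def by auto
      qed
    qed
    moreover have "DeltaQ q e = DeltaQ q e'" using two_rep[OF gq n E pre e_def e'_def] by simp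
    ultimately have "x = DeltaQ q e" by simp
    then show ?thesis
      using main_core[OF gp n E pre cond_i[OF n E] p0 pm L0 Lm e_def e'_def] by blast
  qed
qed

end
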